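(* Consider a radial three-phase grid with $n$ buses $b_1,\dots,b_n$ and $m$ lines, in which a subset of buses (indexed by $\mathcal{M}_b$) is monitored, a monitored bus $b_i$ providing its three phase-to-ground voltage phasors $\dot{\mathbf{V}}^{abc}_i$ and its three injected current phasors $\dot{\mathbf{I}}^{abc}_i$, and the buses indexed by $\mathcal{N}_b=\{1,\dots,n\}\setminus\mathcal{M}_b$ being non-monitored. Suppose that for every $i=1,2,\ldots,n$: (a) if $\rho(b_i)>1$, then $b_i$ has at most one adjacent non-monitored bus; (b) if $\rho(b_i)=1$ and $b_i$ is non-monitored, then $b_i$ is adjacent to a monitored bus. Then the grid is observable.
   Context: A radial grid is a grid whose underlying graph (buses as vertices, lines as edges) is a tree; $\rho(b_i)$ denotes the degree of bus $b_i$, i.e. the number of buses connected to $b_i$ by a line. Each bus $b_i$ has three-phase voltage $\dot{\mathbf{V}}^{abc}_i\in\mathbb{C}^3$. Each line between $b_i$ and $b_j$ is modeled by a known invertible $3\times 3$ complex series admittance matrix $Y_{ij}$ (and possibly known shunt admittance matrices), so that the injected current at bus $b_i$ is $\dot{\mathbf{I}}^{abc}_i=\sum_{j \text{ adjacent to } i} Y_{ij}(\dot{\mathbf{V}}^{abc}_i-\dot{\mathbf{V}}^{abc}_j)+Y^{sh}_i\dot{\mathbf{V}}^{abc}_i$; equivalently $\dot{\mathbf I}=Y\dot{\mathbf V}$ with $Y$ the known network admittance matrix. The state is $x\in\mathbb{R}^{6n}$, the stacked real and imaginary parts of all bus voltages; the (noise-free) measurement vector $z=Hx\in\mathbb{R}^{12d}$,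 $d=|\mathcal{M}_b|$, stacks the real and imaginary parts of $\dot{\mathbf{V}}^{abc}_i$ and $\dot{\mathbf{I}}^{abc}_i$ for $i\in\mathcal{M}_b$. The grid is called observable if, in this noise-free setting, the voltages at all buses are uniquely determined by the measurements, i.e. $Hx=Hx'$ implies $x=x'$. *)

theory Defs
  imports "HOL-Analysis.Analysis"
begin

text \<open>Buses are indexed by 0..<n (bus b_{i+1} of the paper is index i).
  The network graph is given by an adjacency relation adj on buses.\<close>

definition lines :: "nat \<Rightarrow> (nat \<Rightarrow> nat \<Rightarrow> bool) \<Rightarrow> (nat \<times> nat) set" where
  "lines n adj = {(i, j). i < j \<and> j < n \<and> adj i j}"

definition radial :: "nat \<Rightarrow> (nat \<Rightarrow> nat \<Rightarrow> bool) \<Rightarrow> bool" where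
  "radial n adj \<longleftrightarrow>
     (\<forall>i j. adj i j \<longrightarrow> i < n \<and> j < n) \<and>
     (\<forall>i j. adj i j \<longrightarrow> adj j i) \<and>
     (\<forall>i. \<not> adj i i) \<and>
     (\<forall>i j. i < n \<longrightarrow> j < n \<longrightarrow> adj\<^sup>*\<^sup>* i j) \<and>
     card (lines n adj) = n - 1"

definition degree :: "nat \<Rightarrow> (nat \<Rightarrow> nat \<Rightarrow> bool) \<Rightarrow> nat \<Rightarrow> nat" where
  "degree n adj i = card {j. j < n \<and> adj i j}"

definition injected_current ::
  "nat \<Rightarrow> (nat \<Rightarrow> nat \<Rightarrow> bool) \<Rightarrow> (nat \<Rightarrow> nat \<Rightarrow> complex^3^3) \<Rightarrow> (nat \<Rightarrow> complex^3^3)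
   \<Rightarrow> (nat \<Rightarrow> complex^3) \<Rightarrow> nat \<Rightarrow> complex^3" where
  "injected_current n adj Y Ysh V i =
     (\<Sum>j\<in>{j. j < n \<and> adj i j}. Y i j *v (V i - V j)) + Ysh i *v V i"

text \<open>Noise-free measurements: for every monitored bus, its voltage and
  injected current phasors (complex form of the stacked real/imag parts).\<close>
definition measurements ::
  "nat \<Rightarrow> (nat \<Rightarrow> nat \<Rightarrow> bool) \<Rightarrow> (nat \<Rightarrow> nat \<Rightarrow> complex^3^3) \<Rightarrow> (nat \<Rightarrow> complex^3^3)
   \<Rightarrow> nat set \<Rightarrow> (nat \<Rightarrow> complex^3) \<Rightarrow> nat \<Rightarrow> ((complex^3) \<times> (complex^3)) option" where
  "measurements n adj Y Ysh M V i =
     (if i \<in> M then Some (V i, injected_current n adj Y Ysh V i) else None)"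

definition observable ::
  "nat \<Rightarrow> (nat \<Rightarrow> nat \<Rightarrow> bool) \<Rightarrow> (nat \<Rightarrow> nat \<Rightarrow> complex^3^3) \<Rightarrow> (nat \<Rightarrow> complex^3^3)
   \<Rightarrow> nat set \<Rightarrow> bool" where
  "observable n adj Y Ysh M \<longleftrightarrow>
     (\<forall>V V'. measurements n adj Y Ysh M V = measurements n adj Y Ysh M V' \<longrightarrow>
        (\<forall>i<n. V i = V' i))"

end

theory Submission
  imports Defs
begin

lemma inv_kill:
  fixes A :: "complex^3^3"
  assumes "invertible A" "A *v x = 0"
  shows "x = 0"
proof -
  obtain A' where "A' ** A = mat 1" using assms(1) unfolding invertible_def by blast
  hence "A' *v (A *v x) = x" by (simp add: matrix_vector_mul_assoc)
  with assms(2) show ?thesis by simp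
qed

lemma inj_diff:
  "injected_current n adj Y Ysh V i - injected_current n adj Y Ysh V' i =
   (\<Sum>k\<in>{k. k < n \<and> adj i k}. Y i k *v ((V i - V' i) - (V k - V' k))) + Ysh i *v (V i - V' i)"
  unfolding injected_current_def
  by (simp add: sum_subtractf[symmetric] matrix_vector_mult_diff_distrib algebra_simps)

theorem lemma1:
  fixes n :: nat and adj :: "nat \<Rightarrow> nat \<Rightarrow> bool"
    and Y :: "nat \<Rightarrow> nat \<Rightarrow> complex^3^3" and Ysh :: "nat \<Rightarrow> complex^3^3"
    and M :: "nat set"
  assumes "radial n adj"
    and "n \<ge> 2"
    and "\<And>i j. adj i j \<Longrightarrow> invertible (Y i j)"
    and "\<And>i j. adj i j \<Longrightarrow> Y i j = Y j i"
    and "M \<subseteq> {0..<n}"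
    and "\<And>i. i < n \<Longrightarrow> degree n adj i > 1 \<Longrightarrow>
           card {j. j < n \<and> adj i j \<and> j \<notin> M} \<le> 1"
    and "\<And>i. i < n \<Longrightarrow> degree n adj i = 1 \<Longrightarrow> i \<notin> M \<Longrightarrow>
           \<exists>j. j < n \<and> adj i j \<and> j \<in> M"
  shows "observable n adj Y Ysh M"
  unfolding observable_def
proof (rule allI, rule allI, rule impI)
  fix V V' :: "nat \<Rightarrow> complex^3"
  assume meq: "measurements n adj Y Ysh M V = measurements n adj Y Ysh M V'"
  have mon: "V i = V' i \<and> injected_current n adj Y Ysh V i = injected_current n adj Y Ysh V' i"
    if "i \<in> M" for i
    using fun_cong[OF meq, of i] that by (simp add: measurements_def)
  have adjb: "\<And>i j. adj i j \<Longrightarrow> i < n \<and> j < n" and sym: "\<And>i j. adj i j \<Longrightarrow> adj j i"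
    and conn: "\<And>i j. i < n \<Longrightarrow> j < n \<Longrightarrow> adj\<^sup>*\<^sup>* i j"
    using assms(1) unfolding radial_def by blast+
  have A: "V j = V' j" if iM: "i \<in> M" and ij: "adj i j" for i j
  proof (cases "j \<in> M")
    case True then show ?thesis using mon by blast
  next
    case False
    define S where "S = {k. k < n \<and> adj i k}"
    have fS: "finite S" unfolding S_def by simp
    have jS: "j \<in> S" using ij adjb unfolding S_def by blast
    have i_n: "i < n" using adjb ij by blast
    have others: "V k = V' k" if "k \<in> S" "k \<noteq> j" for k
    proof (cases "k \<in> M")
      case True then show ?thesis using mon by blast
    next
      case kM: False
      have "card S \<noteq> 1"
      proof
        assume "card S = 1"
        then obtain x where "S = {x}" using card_1_singletonE by blast
        then show False using jS that by blast
      qed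
      moreover have "card S \<ge> 2"
      proof -
        have "{j, k} \<subseteq> S" using jS that by blast
        hence "card {j,k} \<le> card S" using fS card_mono by blast
        thus ?thesis using that by simp
      qed
      hence "degree n adj i > 1" unfolding degree_def S_def by simp
      hence c: "card {j. j < n \<and> adj i j \<and> j \<notin> M} \<le> 1" using assms(6) i_n by blast
      have "{j, k} \<subseteq> {j. j < n \<and> adj i j \<and> j \<notin> M}" using jS that kM False unfolding S_def by blast
      hence "card {j,k} \<le> card {j. j < n \<and> adj i j \<and> j \<notin> M}" by (intro card_mono) auto
      with c that show ?thesis by simp
    qed
    have "0 = injected_current n adj Y Ysh V i - injected_current n adj Y Ysh V' i"
      using mon iM by simp
    also have "\<dots> = (\<Sum>k\<in>S. Y i k *v ((V i - V' i) - (V k - V' k))) + Ysh i *v (V i - V' i)"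
      unfolding S_def by (rule inj_diff)
    also have "\<dots> = (\<Sum>k\<in>S. Y i k *v (- (V k - V' k)))"
      using mon iM by simp
    also have "\<dots> = Y i j *v (- (V j - V' j)) + (\<Sum>k\<in>S - {j}. Y i k *v (- (V k - V' k)))"
      using fS jS by (simp add: sum.remove)
    also have "(\<Sum>k\<in>S - {j}. Y i k *v (- (V k - V' k))) = 0"
      using others by (intro sum.neutral) auto
    finally have "Y i j *v (- (V j - V' j)) = 0" by simp
    hence "- (V j - V' j) = 0" using inv_kill assms(3)[OF ij] by blast
    thus ?thesis by simp
  qed
  show "\<forall>i<n. V i = V' i"
  proof (intro allI impI)
    fix i assume i_n: "i < n"
    show "V i = V' i"
    proof (cases "i \<in> M")
      case True then show ?thesis using mon by blast
    next
      case iM: False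
      obtain k where k: "k < n" "k \<noteq> i" using assms(2) i_n
        by (metis One_nat_def Suc_1 Suc_le_lessD lessI less_trans_Suc nat_neq_iff not_less_eq zero_less_Suc)
      have "adj\<^sup>*\<^sup>* i k" using conn i_n k by blast
      then obtain x where x: "adj i x" using k(2)
        by (metis converse_rtranclpE)
      define S where "S = {k. k < n \<and> adj i k}"
      have fS: "finite S" unfolding S_def by simp
      have xS: "x \<in> S" using x adjb unfolding S_def by blast
      have "\<exists>j. adj i j \<and> j \<in> M"
      proof (cases "degree n adj i = 1")
        case True then show ?thesis using assms(7)[OF i_n True iM] by blast
      next
        case False
        have "card S \<ge> 1" using fS xS by (metis One_nat_def card_gt_0_iff empty_iff less_eq_Suc_le)
        hence dg: "degree n adj i > 1" using False unfolding degree_def S_def by simp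
        hence c: "card {j. j < n \<and> adj i j \<and> j \<notin> M} \<le> 1" using assms(6) i_n by blast
        show ?thesis
        proof (rule ccontr)
          assume "\<not> ?thesis"
          hence "S = {j. j < n \<and> adj i j \<and> j \<notin> M}" unfolding S_def by blast
          with c dg show False unfolding degree_def S_def by simp
        qed
      qed
      then obtain j where "adj i j" "j \<in> M" by blast
      then show ?thesis using A sym by blast
    qed
  qed
qed

end
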